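(* In the compulsory constrained two-facility location game described in the context, every deterministic strategyproof mechanism has approximation ratio at least $3$ under the sum cost objective.
   Context: An instance consists of $n$ agents with private locations $x_1,\dots,x_n\in\mathbb{R}$, each served by both facilities $F_1,F_2$, and a finite multiset $A=\{a_1\le\dots\le a_m\}$ of real alternative locations. A deterministic mechanism $f$ maps each instance (reported locations and $A$) to $(y_1,y_2)$ with $y_1\in A$, $y_2\in A\setminus\{y_1\}$ (one copy removed from the multiset). Agent $j$'s cost is $c_j(\mathbf{y},x_j)=\max\{|y_1-x_j|,|y_2-x_j|\}$; the sum cost is $sc(\mathbf{y},\mathbf{x})=\sum_j c_j(\mathbf{y},x_j)$. $f$ is strategyproof if no agent can strictly decrease her true cost by misreporting her own location, whatever the others report. The approximation ratio of $f$ is $\sup_{\text{instances}} sc(f(\mathbf{x}),\mathbf{x})/sc(OPT,\mathbf{x})$, where $OPT$ minimizes the sum cost over feasible outcomes. *)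

theory Defs
  imports Complex_Main "HOL-Library.Multiset" "HOL-Library.Extended_Real"
begin

definition feasible :: "real multiset \<Rightarrow> real \<times> real \<Rightarrow> bool" where
  "feasible A y \<longleftrightarrow> fst y \<in># A \<and> snd y \<in># A - {# fst y #}"

definition agent_cost :: "real \<times> real \<Rightarrow> real \<Rightarrow> real" where
  "agent_cost y x = max \<bar>fst y - x\<bar> \<bar>snd y - x\<bar>"

definition social_cost :: "real \<times> real \<Rightarrow> real list \<Rightarrow> real" where
  "social_cost y xs = (\<Sum>j<length xs. agent_cost y (xs ! j))"

definition opt_cost :: "real list \<Rightarrow> real multiset \<Rightarrow> real" where
  "opt_cost xs A = Min {social_cost y xs | y. feasible A y}"

definition valid_instance :: "real list \<Rightarrow> real multiset \<Rightarrow> bool" where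
  "valid_instance xs A \<longleftrightarrow> xs \<noteq> [] \<and> size A \<ge> 2"

definition is_mechanism :: "(real list \<Rightarrow> real multiset \<Rightarrow> real \<times> real) \<Rightarrow> bool" where
  "is_mechanism f \<longleftrightarrow> (\<forall>xs A. valid_instance xs A \<longrightarrow> feasible A (f xs A))"

definition strategyproof :: "(real list \<Rightarrow> real multiset \<Rightarrow> real \<times> real) \<Rightarrow> bool" where
  "strategyproof f \<longleftrightarrow>
     (\<forall>xs A i x'. valid_instance xs A \<longrightarrow> i < length xs \<longrightarrow>
        agent_cost (f xs A) (xs ! i) \<le> agent_cost (f (xs[i := x']) A) (xs ! i))"

text \<open>Ratio on one instance, with the conventions c/0 = \<infinity> for c > 0 and 0/0 = 1.\<close>
definition inst_ratio :: "real \<Rightarrow> real \<Rightarrow> ereal" where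
  "inst_ratio c opt = (if opt > 0 then ereal (c / opt) else if c = 0 then 1 else \<infinity>)"

definition approx_ratio :: "(real list \<Rightarrow> real multiset \<Rightarrow> real \<times> real) \<Rightarrow> ereal" where
  "approx_ratio f = (SUP p \<in> {(xs, A). valid_instance xs A}.
      inst_ratio (social_cost (f (fst p) (snd p)) (fst p)) (opt_cost (fst p) (snd p)))"

end

theory Submission
  imports Defs
begin

lemma feas_finite: "finite {y. feasible A y}"
proof -
  have "{y. feasible A y} \<subseteq> set_mset A \<times> set_mset A"
    by (auto simp: feasible_def dest: in_diffD)
  then show ?thesis by (rule finite_subset) simp
qed

lemma sc_set_eq: "{social_cost y xs | y. feasible A y} = (\<lambda>y. social_cost y xs) ` {y. feasible A y}"
  by auto

lemma opt_le: "feasible A y \<Longrightarrow> opt_cost xs A \<le> social_cost y xs"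
  unfolding opt_cost_def sc_set_eq
  by (rule Min_le) (auto intro: finite_imageI feas_finite)

lemma sc2: "social_cost y [a, b] = agent_cost y a + agent_cost y b"
  by (simp add: social_cost_def lessThan_nat_numeral)

lemma sc_pos: "a \<noteq> b \<Longrightarrow> social_cost y [a, b] > 0"
  unfolding sc2 agent_cost_def by (cases y) (auto simp: max_def abs_if split: if_splits)

lemma opt_pos:
  assumes "feasible A yy" "a \<noteq> b"
  shows "opt_cost [a, b] A > 0"
proof -
  have fin: "finite ((\<lambda>y. social_cost y [a,b]) ` {y. feasible A y})"
    by (intro finite_imageI feas_finite)
  have ne: "(\<lambda>y. social_cost y [a,b]) ` {y. feasible A y} \<noteq> {}" using assms(1) by blast
  show ?thesis unfolding opt_cost_def sc_set_eq
    using Min_in[OF fin ne] sc_pos[OF assms(2)] by auto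
qed

lemma ratio_lb:
  assumes "valid_instance xs A" "feasible A yy" "social_cost (f xs A) xs \<ge> c" "c \<ge> 0"
    "0 < opt_cost xs A"
  shows "ereal (c / social_cost yy xs) \<le> approx_ratio f"
proof -
  have "c / social_cost yy xs \<le> social_cost (f xs A) xs / opt_cost xs A"
    using assms opt_le[OF assms(2), of xs] by (intro frac_le) auto
  also have "ereal (social_cost (f xs A) xs / opt_cost xs A)
     = inst_ratio (social_cost (f xs A) xs) (opt_cost xs A)"
    using assms(5) by (simp add: inst_ratio_def)
  also have "\<dots> \<le> approx_ratio f"
    unfolding approx_ratio_def
    using assms(1) by (intro SUP_upper2[where i="(xs, A)"]) auto
  finally show ?thesis by simp
qed

definition AA :: "real multiset" where "AA = {#0, 0, 2, 2#}"

lemma feasAA: "feasible AA y \<longleftrightarrow> y = (0,0) \<or> y = (0,2) \<or> y = (2,0) \<or> y = (2,2)"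
  by (cases y) (auto simp: feasible_def AA_def)

lemma validAA: "valid_instance [a, b] AA"
  by (simp add: valid_instance_def AA_def)

lemma main_bound:
  fixes f :: "real list \<Rightarrow> real multiset \<Rightarrow> real \<times> real"
  assumes mech: "is_mechanism f" and sp: "strategyproof f" and t: "0 < t" "t < 1"
  shows "ereal ((3 - t) / (1 + t)) \<le> approx_ratio f"
proof -
  have feasf: "\<And>a b. f [a,b] AA = (0,0) \<or> f [a,b] AA = (0,2) \<or> f [a,b] AA = (2,0) \<or> f [a,b] AA = (2,2)"
    using mech validAA unfolding is_mechanism_def feasAA[symmetric] by blast
  have spf: "\<And>xs i x'. valid_instance xs AA \<Longrightarrow> i < length xs \<Longrightarrow>
        agent_cost (f xs AA) (xs ! i) \<le> agent_cost (f (xs[i := x']) AA) (xs ! i)"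
    using sp unfolding strategyproof_def by blast
  show ?thesis
  proof (cases "f [1-t, 1+t] AA = (2,2)")
    case True
    have "agent_cost (f [1-t,1+t] AA) (1-t) \<le> agent_cost (f [0,1+t] AA) (1-t)"
      using spf[OF validAA, of 0 "1-t" "1+t" 0] by simp
    hence c1: "1 + t \<le> agent_cost (f [0,1+t] AA) (1-t)" using True t by (simp add: agent_cost_def)
    have "f [0,1+t] AA \<noteq> (0,0)"
      using c1 t by (auto simp: agent_cost_def)
    hence "social_cost (f [0,1+t] AA) [0,1+t] \<ge> 3 - t"
      using feasf[of 0 "1+t"] t by (auto simp: sc2 agent_cost_def)
    moreover have "social_cost (0,0) [0::real,1+t] = 1 + t" using t by (simp add: sc2 agent_cost_def)
    ultimately show ?thesis
      using ratio_lb[OF validAA[of 0 "1+t"], where yy="(0,0)" and f=f and c="3-t"] opt_pos[of AA "(0,0)" 0 "1+t"] t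
      by (simp add: feasAA)
  next
    case False
    have "agent_cost (f [1-t,1+t] AA) (1+t) \<le> agent_cost (f [1-t,2] AA) (1+t)"
      using spf[OF validAA, of 1 "1-t" "1+t" 2] by simp
    hence c1: "1 + t \<le> agent_cost (f [1-t,2] AA) (1+t)"
      using False feasf[of "1-t" "1+t"] t by (auto simp: agent_cost_def)
    have "f [1-t,2] AA \<noteq> (2,2)"
      using c1 t by (auto simp: agent_cost_def)
    hence "social_cost (f [1-t,2] AA) [1-t,2] \<ge> 3 - t"
      using feasf[of "1-t" 2] t by (auto simp: sc2 agent_cost_def)
    moreover have "social_cost (2,2) [1-t,2::real] = 1 + t" using t by (simp add: sc2 agent_cost_def)
    ultimately show ?thesis
      using ratio_lb[OF validAA[of "1-t" 2], where yy="(2,2)" and f=f and c="3-t"] opt_pos[of AA "(2,2)" "1-t" 2] t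
      by (simp add: feasAA)
  qed
qed

theorem theorem1:
  fixes f :: "real list \<Rightarrow> real multiset \<Rightarrow> real \<times> real"
  assumes "is_mechanism f" and "strategyproof f"
  shows "approx_ratio f \<ge> 3"
proof (rule ereal_le_epsilon2)
  fix e :: real assume e: "0 < e"
  define t where "t = min (e/4) (1/2)"
  have t: "0 < t" "t < 1" "4 * t \<le> e" using e by (auto simp: t_def)
  have "3 - 4 * t \<le> (3 - t) / (1 + t)"
    using t by (simp add: field_simps)
  hence "ereal (3 - 4*t) \<le> approx_ratio f"
    using main_bound[OF assms t(1,2)] order_trans by (metis ereal_less_eq(3))
  hence "ereal 3 \<le> approx_ratio f + ereal (4*t)"
    by (cases "approx_ratio f") auto
  also have "\<dots> \<le> approx_ratio f + ereal e"
    using t by (intro add_left_mono) auto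
  finally show "3 \<le> approx_ratio f + ereal e" by simp
qed

end
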